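(* In the setting of the context, let $\widehat{df}_\lambda=\mathrm{rank}(\tilde XP)$ and define $\mathcal T=\{j:\|\hat\Theta_j\|_1=\hat\beta^+_j+\hat\beta^-_j\}$, $\mathcal A_\beta=\{j:\hat\beta^+_j-\hat\beta^-_j\ne0\}$, $\mathcal A_\pm=\{j:\hat\beta^\pm_j>0\}$, and $\mathcal A_\Theta=\{(j,k):\hat\Theta_{jk}\ne0,\ j<k\}$. Then almost surely $$\widehat{df}_\lambda\le|\mathcal A_\beta|+|\mathcal A_\Theta|-\big|\mathcal T\cap(\mathcal A_+\Delta\mathcal A_-)\big|,$$ where $\mathcal A_+\Delta\mathcal A_-=(\mathcal A_+\setminus\mathcal A_-)\cup(\mathcal A_-\setminus\mathcal A_+)$.
   Context: $X\in\mathbb{R}^{n\times p}$ with columns $x_j$, $\lambda>0$, $y\sim N(\mu,\sigma^2I_n)$. $(\hat\beta^+,\hat\beta^-,\hat\Theta)$ is a solution of the strong hierarchical lasso with quadratic loss and no ridge penalty: minimize $\frac12\|y-X(\beta^+-\beta^-)-\frac12\sum_{j\ne k}\Theta_{jk}x_j*x_k\|^2+\lambda\mathbf 1^T(\beta^++\beta^-)+\frac\lambda2\sum_{j\ne k}|\Theta_{jk}|$ over $\beta^\pm\in\mathbb{R}^p$, $\Theta\in\mathbb{R}^{p\times p}$ with $\Theta_{jj}=0$, subject to $\Theta=\Theta^T$, $\|\Theta_j\|_1:=\sum_k|\Theta_{jk}|\le\beta^+_j+\beta^-_j$, $\beta^\pm\ge0$. Write it with $\Theta=\Theta^+-\Theta^-$,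 $\Theta^\pm=\max\{\pm\Theta,0\}$, variable $\phi=(\beta^+,\beta^-,\mathrm{vec}(\Theta^+),\mathrm{vec}(\Theta^-))$, $\tilde X=(X,-X,Z/2,-Z/2)$ where $Z\in\mathbb{R}^{n\times p^2}$ has column $(j,k)$ equal to $x_j*x_k$; $D$ is the matrix whose rows encode the inequality constraints $\beta^\pm_j\ge0$, $\beta^+_j+\beta^-_j-\mathbf 1^T(\Theta^+_j+\Theta^-_j)\ge0$, $\Theta^\pm_{jk}\ge0$ ($j\ne k$), and $L$ the matrix whose rows encode $\Theta^\pm_{jj}=0$ and $\Theta^+-\Theta^-=(\Theta^+-\Theta^-)^T$. $P$ is the orthogonal projection onto $\{v:Lv=0,\ D_iv=0 \text{ for all rows } i \text{ with } D_i\hat\phi=0\}$. *)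

theory Defs
  imports "HOL-Analysis.Analysis" "HOL-Probability.Probability"
begin

text \<open>Parameter vector phi = (beta+, beta-, Theta+, Theta-), an element of the
  Euclidean space R^p x R^p x R^(p x p) x R^(p x p) (standard inner product).\<close>
type_synonym 'p phi = "(real^'p) \<times> (real^'p) \<times> (real^'p^'p) \<times> (real^'p^'p)"

definition col :: "real^'p^'n \<Rightarrow> 'p \<Rightarrow> real^'n" where
  "col X j = (\<chi> i. X $ i $ j)"

definition hadam :: "real^'n \<Rightarrow> real^'n \<Rightarrow> real^'n" where
  "hadam u v = (\<chi> i. u $ i * v $ i)"

text \<open>Objective of the strong hierarchical lasso (quadratic loss, no ridge).\<close>
definition shl_obj ::
  "real^'p^'n \<Rightarrow> real^'n \<Rightarrow> real \<Rightarrow> real^'p \<Rightarrow> real^'p \<Rightarrow> real^'p^'p \<Rightarrow> real" where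
  "shl_obj X y lam bp bm Th =
     1/2 * (norm (y - X *v (bp - bm)
        - (1/2) *\<^sub>R (\<Sum>j\<in>UNIV. \<Sum>k\<in>UNIV - {j}. Th $ j $ k *\<^sub>R hadam (col X j) (col X k))))\<^sup>2
     + lam * (\<Sum>j\<in>UNIV. bp $ j + bm $ j)
     + lam / 2 * (\<Sum>j\<in>UNIV. \<Sum>k\<in>UNIV - {j}. \<bar>Th $ j $ k\<bar>)"

definition shl_feasible :: "real^'p \<Rightarrow> real^'p \<Rightarrow> real^'p^'p \<Rightarrow> bool" where
  "shl_feasible bp bm Th \<longleftrightarrow>
     (\<forall>j. Th $ j $ j = 0) \<and> (\<forall>j k. Th $ j $ k = Th $ k $ j) \<and>
     (\<forall>j. (\<Sum>k\<in>UNIV. \<bar>Th $ j $ k\<bar>) \<le> bp $ j + bm $ j) \<and>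
     (\<forall>j. 0 \<le> bp $ j \<and> 0 \<le> bm $ j)"

definition shl_solution ::
  "real^'p^'n \<Rightarrow> real^'n \<Rightarrow> real \<Rightarrow> real^'p \<Rightarrow> real^'p \<Rightarrow> real^'p^'p \<Rightarrow> bool" where
  "shl_solution X y lam bp bm Th \<longleftrightarrow> shl_feasible bp bm Th \<and>
     (\<forall>bp' bm' Th'. shl_feasible bp' bm' Th' \<longrightarrow>
        shl_obj X y lam bp bm Th \<le> shl_obj X y lam bp' bm' Th')"

definition phi_of :: "real^'p \<Rightarrow> real^'p \<Rightarrow> real^'p^'p \<Rightarrow> 'p phi" where
  "phi_of bp bm Th = (bp, bm, \<chi> j k. max (Th $ j $ k) 0, \<chi> j k. max (- Th $ j $ k) 0)"

text \<open>The linear map Xtilde = (X, -X, Z/2, -Z/2); column (j,k) of Z is x_j * x_k.\<close>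
definition Xtilde :: "real^'p^'n \<Rightarrow> 'p phi \<Rightarrow> real^'n" where
  "Xtilde X v = (case v of (bp, bm, Tp, Tm) \<Rightarrow>
     X *v bp - X *v bm
     + (1/2) *\<^sub>R (\<Sum>j\<in>UNIV. \<Sum>k\<in>UNIV. Tp $ j $ k *\<^sub>R hadam (col X j) (col X k))
     - (1/2) *\<^sub>R (\<Sum>j\<in>UNIV. \<Sum>k\<in>UNIV. Tm $ j $ k *\<^sub>R hadam (col X j) (col X k)))"

text \<open>The subspace {v. L v = 0, D_i v = 0 for all rows i active at phi}.\<close>
definition active_space :: "('p::finite) phi \<Rightarrow> 'p phi set" where
  "active_space ph = (case ph of (bp, bm, Tp, Tm) \<Rightarrow>
     {(vbp, vbm, vTp, vTm).
        (\<forall>j. vTp $ j $ j = 0 \<and> vTm $ j $ j = 0) \<and>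
        (\<forall>j k. vTp $ j $ k - vTm $ j $ k = vTp $ k $ j - vTm $ k $ j) \<and>
        (\<forall>j. bp $ j = 0 \<longrightarrow> vbp $ j = 0) \<and>
        (\<forall>j. bm $ j = 0 \<longrightarrow> vbm $ j = 0) \<and>
        (\<forall>j. bp $ j + bm $ j - (\<Sum>k\<in>UNIV. Tp $ j $ k + Tm $ j $ k) = 0 \<longrightarrow>
              vbp $ j + vbm $ j - (\<Sum>k\<in>UNIV. vTp $ j $ k + vTm $ j $ k) = 0) \<and>
        (\<forall>j k. j \<noteq> k \<longrightarrow> Tp $ j $ k = 0 \<longrightarrow> vTp $ j $ k = 0) \<and>
        (\<forall>j k. j \<noteq> k \<longrightarrow> Tm $ j $ k = 0 \<longrightarrow> vTm $ j $ k = 0)})"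

definition orth_proj :: "'a::real_inner set \<Rightarrow> 'a \<Rightarrow> 'a" where
  "orth_proj V v = (THE w. w \<in> V \<and> (\<forall>u\<in>V. inner (v - w) u = 0))"

definition gauss_law :: "real^'n \<Rightarrow> real \<Rightarrow> (real^'n) measure" where
  "gauss_law mu sg = density lborel (\<lambda>y. ennreal (\<Prod>i\<in>UNIV. normal_density (mu $ i) sg (y $ i)))"

end

theory Submission
  imports Defs
begin


lemma Xt_add: "Xtilde X (u + v) = Xtilde X u + Xtilde X v"
  by (cases u; cases v) (simp add: Xtilde_def matrix_vector_right_distrib algebra_simps scaleR_add_left sum.distrib)

lemma Xt_scale: "Xtilde X (c *\<^sub>R u) = c *\<^sub>R Xtilde X u"
  by (cases u) (simp add: Xtilde_def algebra_simps scaleR_sum_right matrix_vector_mult_scaleR)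

lemma Xt_linear: "linear (Xtilde X)"
  by (rule linearI) (simp_all add: Xt_add Xt_scale)



definition fitf :: "real^'p^'n \<Rightarrow> real^'p \<Rightarrow> real^'p \<Rightarrow> real^'p^'p \<Rightarrow> real^'n" where
  "fitf X bp bm Th = X *v (bp - bm)
     + (1/2) *\<^sub>R (\<Sum>j\<in>UNIV. \<Sum>k\<in>UNIV - {j}. Th $ j $ k *\<^sub>R hadam (col X j) (col X k))"

lemma obj_eq: "shl_obj X y lam bp bm Th = 1/2 * (norm (y - fitf X bp bm Th))\<^sup>2
     + lam * (\<Sum>j\<in>UNIV. bp $ j + bm $ j)
     + lam / 2 * (\<Sum>j\<in>UNIV. \<Sum>k\<in>UNIV - {j}. \<bar>Th $ j $ k\<bar>)"
  by (simp add: shl_obj_def fitf_def algebra_simps)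

lemma Xt_gen:
  fixes X :: "real^'p::finite^'n"
  assumes "\<And>j. Tp $ j $ j = Tm $ j $ j"
  shows "Xtilde X (bp, bm, Tp, Tm) = fitf X bp bm (Tp - Tm)"
proof -
  have "(1/2) *\<^sub>R (\<Sum>j\<in>UNIV. \<Sum>k\<in>UNIV. Tp $ j $ k *\<^sub>R hadam (col X j) (col X k))
     - (1/2) *\<^sub>R (\<Sum>j\<in>UNIV. \<Sum>k\<in>UNIV. Tm $ j $ k *\<^sub>R hadam (col X j) (col X k))
     = (1/2) *\<^sub>R (\<Sum>j\<in>UNIV. \<Sum>k\<in>UNIV. (Tp - Tm) $ j $ k *\<^sub>R hadam (col X j) (col X k))"
    by (simp add: scaleR_diff_right[symmetric] sum_subtractf[symmetric] scaleR_diff_left)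
  also have "(\<Sum>j\<in>UNIV. \<Sum>k\<in>UNIV. (Tp - Tm) $ j $ k *\<^sub>R hadam (col X j) (col X k))
     = (\<Sum>j\<in>UNIV. \<Sum>k\<in>UNIV - {j}. (Tp - Tm) $ j $ k *\<^sub>R hadam (col X j) (col X k))"
  proof (rule sum.cong[OF refl])
    fix j
    show "(\<Sum>k\<in>UNIV. (Tp - Tm) $ j $ k *\<^sub>R hadam (col X j) (col X k))
       = (\<Sum>k\<in>UNIV - {j}. (Tp - Tm) $ j $ k *\<^sub>R hadam (col X j) (col X k))"
      using assms[of j] by (simp add: sum.remove[of UNIV j])
  qed
  finally show ?thesis
    by (simp add: Xtilde_def fitf_def matrix_vector_right_distrib[symmetric] algebra_simps)
qed

definition Tpos :: "real^'p^'p \<Rightarrow> real^'p^'p" where "Tpos Th = (\<chi> j k. max (Th $ j $ k) 0)"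
definition Tneg :: "real^'p^'p \<Rightarrow> real^'p^'p" where "Tneg Th = (\<chi> j k. max (- Th $ j $ k) 0)"

lemma phi_of_alt: "phi_of bp bm Th = (bp, bm, Tpos Th, Tneg Th)"
  by (simp add: phi_of_def Tpos_def Tneg_def)

lemma Tpos_Tneg: "Tpos Th - Tneg Th = Th"
  by (simp add: Tpos_def Tneg_def vec_eq_iff max_def)

lemma Tpos_Tneg_abs: "Tpos Th $ j $ k + Tneg Th $ j $ k = \<bar>Th $ j $ k\<bar>"
  by (simp add: Tpos_def Tneg_def max_def)

lemma Xt_phi:
  fixes X :: "real^'p::finite^'n"
  assumes "\<And>j. Th $ j $ j = 0"
  shows "Xtilde X (phi_of bp bm Th) = fitf X bp bm Th"
proof -
  have "Xtilde X (bp, bm, Tpos Th, Tneg Th) = fitf X bp bm (Tpos Th - Tneg Th)"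
    by (rule Xt_gen) (simp add: Tpos_def Tneg_def assms)
  then show ?thesis by (simp only: phi_of_alt Tpos_Tneg)
qed



definition cpen :: "('p::finite) phi \<Rightarrow> real" where
  "cpen v = (case v of (a, b, C, D) \<Rightarrow>
     (\<Sum>j\<in>UNIV. a $ j + b $ j) + 1/2 * (\<Sum>j\<in>UNIV. \<Sum>k\<in>UNIV - {j}. C $ j $ k + D $ j $ k))"

lemma ev_pos:
  assumes "(c::real) > 0"
  shows "eventually (\<lambda>t. 0 < c + t * d) (nhds (0::real))"
proof -
  have "((\<lambda>t. c + t * d) \<longlongrightarrow> c + 0 * d) (nhds (0::real))"
    by (intro tendsto_intros) (simp add: tendsto_ident_at filterlim_ident)
  then show ?thesis using assms by (auto dest: order_tendstoD(1))
qed

lemma sol_feas: "shl_solution X y lam bp bm Th \<Longrightarrow> shl_feasible bp bm Th"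
  by (simp add: shl_solution_def)

lemma sum_abs_T: "(\<Sum>k\<in>UNIV. Tpos Th $ j $ k + Tneg Th $ j $ k) = (\<Sum>k\<in>UNIV. \<bar>Th $ j $ k\<bar>)"
  by (simp add: Tpos_Tneg_abs)

lemma active_alt: "active_space (phi_of bp bm Th) =
   {(a, b, C, D).
        (\<forall>j. C $ j $ j = 0 \<and> D $ j $ j = 0) \<and>
        (\<forall>j k. C $ j $ k - D $ j $ k = C $ k $ j - D $ k $ j) \<and>
        (\<forall>j. bp $ j = 0 \<longrightarrow> a $ j = 0) \<and>
        (\<forall>j. bm $ j = 0 \<longrightarrow> b $ j = 0) \<and>
        (\<forall>j. (\<Sum>k\<in>UNIV. \<bar>Th $ j $ k\<bar>) = bp $ j + bm $ j \<longrightarrow>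
              a $ j + b $ j - (\<Sum>k\<in>UNIV. C $ j $ k + D $ j $ k) = 0) \<and>
        (\<forall>j k. j \<noteq> k \<longrightarrow> Tpos Th $ j $ k = 0 \<longrightarrow> C $ j $ k = 0) \<and>
        (\<forall>j k. j \<noteq> k \<longrightarrow> Tneg Th $ j $ k = 0 \<longrightarrow> D $ j $ k = 0)}"
  unfolding phi_of_alt active_space_def using sum_abs_T[of Th]
  by (auto simp: algebra_simps)

lemma stationarity:
  fixes X :: "real^'p::finite^'n"
  assumes sol: "shl_solution X y lam bp bm Th"
    and v: "(a, b, C, D) \<in> active_space (phi_of bp bm Th)"
  shows "inner (y - Xtilde X (phi_of bp bm Th)) (Xtilde X (a, b, C, D)) = lam * cpen (a, b, C, D)"
proof -
  define Tp where "Tp = Tpos Th"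
  define Tm where "Tm = Tneg Th"
  have fe: "shl_feasible bp bm Th" using sol by (rule sol_feas)
  have diag: "\<And>j. Th $ j $ j = 0" and sym: "\<And>j k. Th $ j $ k = Th $ k $ j"
    and hier: "\<And>j. (\<Sum>k\<in>UNIV. \<bar>Th $ j $ k\<bar>) \<le> bp $ j + bm $ j"
    and nn: "\<And>j. 0 \<le> bp $ j" "\<And>j. 0 \<le> bm $ j"
    using fe unfolding shl_feasible_def by auto
  have vdiag: "\<And>j. C $ j $ j = 0" "\<And>j. D $ j $ j = 0"
    and vsym: "\<And>j k. C $ j $ k - D $ j $ k = C $ k $ j - D $ k $ j"
    and va: "\<And>j. bp $ j = 0 \<Longrightarrow> a $ j = 0"
    and vb: "\<And>j. bm $ j = 0 \<Longrightarrow> b $ j = 0"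
    and vt: "\<And>j. (\<Sum>k\<in>UNIV. \<bar>Th $ j $ k\<bar>) = bp $ j + bm $ j \<Longrightarrow>
              a $ j + b $ j - (\<Sum>k\<in>UNIV. C $ j $ k + D $ j $ k) = 0"
    and vC: "\<And>j k. j \<noteq> k \<Longrightarrow> Tp $ j $ k = 0 \<Longrightarrow> C $ j $ k = 0"
    and vD: "\<And>j k. j \<noteq> k \<Longrightarrow> Tm $ j $ k = 0 \<Longrightarrow> D $ j $ k = 0"
    using v unfolding active_alt Tp_def Tm_def by auto
  define Th' where "Th' t = (Tp + t *\<^sub>R C) - (Tm + t *\<^sub>R D)" for t :: real
  have absev: "eventually (\<lambda>t. \<bar>Th' t $ j $ k\<bar> = \<bar>Th $ j $ k\<bar> + t * (C $ j $ k + D $ j $ k)) (nhds 0)"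
    for j k
  proof (cases "j = k")
    case True then show ?thesis using diag vdiag by (simp add: Th'_def Tp_def Tm_def Tpos_def Tneg_def)
  next
    case False
    consider "Th $ j $ k > 0" | "Th $ j $ k < 0" | "Th $ j $ k = 0" by linarith
    then show ?thesis
    proof cases
      case 1
      then have "Tm $ j $ k = 0" "Tp $ j $ k = Th $ j $ k" by (simp_all add: Tp_def Tm_def Tpos_def Tneg_def)
      then have "D $ j $ k = 0" using vD False by auto
      show ?thesis using ev_pos[OF 1, of "C $ j $ k"]
        by eventually_elim (use \<open>Tm $ j $ k = 0\<close> \<open>Tp $ j $ k = _\<close> \<open>D $ j $ k = 0\<close> 1 in \<open>simp add: Th'_def\<close>)
    next
      case 2
      then have "Tp $ j $ k = 0" "Tm $ j $ k = - Th $ j $ k" by (simp_all add: Tp_def Tm_def Tpos_def Tneg_def)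
      then have "C $ j $ k = 0" using vC False by auto
      have ng: "0 < - Th $ j $ k" using 2 by simp
      show ?thesis using ev_pos[OF ng, of "D $ j $ k"]
        by eventually_elim (use \<open>Tp $ j $ k = 0\<close> \<open>Tm $ j $ k = _\<close> \<open>C $ j $ k = 0\<close> 2 in \<open>simp add: Th'_def\<close>)
    next
      case 3
      then have "Tp $ j $ k = 0" "Tm $ j $ k = 0" by (simp_all add: Tp_def Tm_def Tpos_def Tneg_def)
      then have "C $ j $ k = 0" "D $ j $ k = 0" using vC vD False by auto
      then show ?thesis using \<open>Tp $ j $ k = 0\<close> \<open>Tm $ j $ k = 0\<close> 3 by (simp add: Th'_def)
    qed
  qed
  have nnev: "eventually (\<lambda>t. 0 \<le> bp $ j + t * a $ j) (nhds 0)" for j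
  proof (cases "bp $ j = 0")
    case True then show ?thesis using va by simp
  next
    case False then have "bp $ j > 0" using nn(1)[of j] by simp
    from ev_pos[OF this, of "a $ j"] show ?thesis by eventually_elim simp
  qed
  have nnev2: "eventually (\<lambda>t. 0 \<le> bm $ j + t * b $ j) (nhds 0)" for j
  proof (cases "bm $ j = 0")
    case True then show ?thesis using vb by simp
  next
    case False then have "bm $ j > 0" using nn(2)[of j] by simp
    from ev_pos[OF this, of "b $ j"] show ?thesis by eventually_elim simp
  qed
  have hev: "eventually (\<lambda>t. (\<Sum>k\<in>UNIV. \<bar>Th $ j $ k\<bar>) + t * (\<Sum>k\<in>UNIV. C $ j $ k + D $ j $ k)
      \<le> bp $ j + t * a $ j + (bm $ j + t * b $ j)) (nhds 0)" for j
  proof (cases "(\<Sum>k\<in>UNIV. \<bar>Th $ j $ k\<bar>) = bp $ j + bm $ j")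
    case True
    then have "a $ j + b $ j = (\<Sum>k\<in>UNIV. C $ j $ k + D $ j $ k)" using vt by simp
    then have "\<forall>t. t * (\<Sum>k\<in>UNIV. C $ j $ k + D $ j $ k) = t * a $ j + t * b $ j"
      by (simp add: distrib_left[symmetric])
    then show ?thesis using True by (intro always_eventually) (simp add: algebra_simps)
  next
    case False
    then have ps: "0 < bp $ j + bm $ j - (\<Sum>k\<in>UNIV. \<bar>Th $ j $ k\<bar>)" using hier[of j] by simp
    from ev_pos[OF ps, of "a $ j + b $ j - (\<Sum>k\<in>UNIV. C $ j $ k + D $ j $ k)"]
    show ?thesis by eventually_elim (simp add: algebra_simps)
  qed
  have allev: "eventually (\<lambda>t. \<forall>j. (\<forall>k. \<bar>Th' t $ j $ k\<bar> = \<bar>Th $ j $ k\<bar> + t * (C $ j $ k + D $ j $ k))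
      \<and> 0 \<le> bp $ j + t * a $ j \<and> 0 \<le> bm $ j + t * b $ j \<and>
      (\<Sum>k\<in>UNIV. \<bar>Th $ j $ k\<bar>) + t * (\<Sum>k\<in>UNIV. C $ j $ k + D $ j $ k)
      \<le> bp $ j + t * a $ j + (bm $ j + t * b $ j)) (nhds 0)"
    by (intro eventually_all_finite eventually_conj absev nnev nnev2 hev)
  obtain d where d: "d > 0" and dP: "\<And>t. dist t 0 < d \<Longrightarrow> (\<forall>j. (\<forall>k. \<bar>Th' t $ j $ k\<bar> = \<bar>Th $ j $ k\<bar> + t * (C $ j $ k + D $ j $ k))
      \<and> 0 \<le> bp $ j + t * a $ j \<and> 0 \<le> bm $ j + t * b $ j \<and>
      (\<Sum>k\<in>UNIV. \<bar>Th $ j $ k\<bar>) + t * (\<Sum>k\<in>UNIV. C $ j $ k + D $ j $ k)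
      \<le> bp $ j + t * a $ j + (bm $ j + t * b $ j))"
    using allev unfolding eventually_nhds_metric by blast
  define r where "r = y - Xtilde X (phi_of bp bm Th)"
  define m where "m = Xtilde X (a, b, C, D)"
  define g where "g t = t * (lam * cpen (a, b, C, D) - inner r m) + t\<^sup>2 * (inner m m / 2)" for t
  have TpTm: "Tp - Tm = Th" by (simp add: Tp_def Tm_def Tpos_Tneg)
  have Tpd: "Tp $ j $ j = 0" "Tm $ j $ j = 0" for j using diag by (simp_all add: Tp_def Tm_def Tpos_def Tneg_def)
  have phi: "phi_of bp bm Th = (bp, bm, Tp, Tm)" by (simp add: phi_of_alt Tp_def Tm_def)
  have Xphi: "fitf X bp bm Th = Xtilde X (phi_of bp bm Th)" using Xt_phi[of Th X bp bm] diag by simp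
  have key: "shl_obj X y lam bp bm Th \<le> shl_obj X y lam bp bm Th + g t" if "\<bar>t\<bar> < d" for t
  proof -
    have P: "\<And>j. (\<forall>k. \<bar>Th' t $ j $ k\<bar> = \<bar>Th $ j $ k\<bar> + t * (C $ j $ k + D $ j $ k))
      \<and> 0 \<le> bp $ j + t * a $ j \<and> 0 \<le> bm $ j + t * b $ j \<and>
      (\<Sum>k\<in>UNIV. \<bar>Th $ j $ k\<bar>) + t * (\<Sum>k\<in>UNIV. C $ j $ k + D $ j $ k)
      \<le> bp $ j + t * a $ j + (bm $ j + t * b $ j)"
      using dP[of t] that by (simp add: dist_real_def)
    have abs': "\<And>j k. \<bar>Th' t $ j $ k\<bar> = \<bar>Th $ j $ k\<bar> + t * (C $ j $ k + D $ j $ k)" using P by blast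
    have Th'c: "Th' t $ j $ k = Th $ j $ k + t * (C $ j $ k - D $ j $ k)" for j k
      using TpTm by (simp add: Th'_def vec_eq_iff algebra_simps)
    have sumabs: "(\<Sum>k\<in>UNIV. \<bar>Th' t $ j $ k\<bar>) = (\<Sum>k\<in>UNIV. \<bar>Th $ j $ k\<bar>) + t * (\<Sum>k\<in>UNIV. C $ j $ k + D $ j $ k)" for j
      by (simp only: abs' sum.distrib[of "\<lambda>k. \<bar>Th $ j $ k\<bar>"] sum_distrib_left)
    have feas: "shl_feasible (bp + t *\<^sub>R a) (bm + t *\<^sub>R b) (Th' t)"
      unfolding shl_feasible_def
    proof (intro conjI allI)
      fix j k
      show "Th' t $ j $ j = 0" using Th'c[of j j] diag vdiag by simp
      show "Th' t $ j $ k = Th' t $ k $ j" using Th'c[of j k] Th'c[of k j] sym[of j k] vsym[of j k] by simp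
    next
      fix j
      show "(\<Sum>k\<in>UNIV. \<bar>Th' t $ j $ k\<bar>) \<le> (bp + t *\<^sub>R a) $ j + (bm + t *\<^sub>R b) $ j"
        using P[of j] sumabs[of j] by simp
      show "0 \<le> (bp + t *\<^sub>R a) $ j" "0 \<le> (bm + t *\<^sub>R b) $ j" using P[of j] by simp_all
    qed
    have le: "shl_obj X y lam bp bm Th \<le> shl_obj X y lam (bp + t *\<^sub>R a) (bm + t *\<^sub>R b) (Th' t)"
      using sol feas unfolding shl_solution_def by blast
    have fit: "fitf X (bp + t *\<^sub>R a) (bm + t *\<^sub>R b) (Th' t) = Xtilde X (phi_of bp bm Th) + t *\<^sub>R m"
    proof -
      have "fitf X (bp + t *\<^sub>R a) (bm + t *\<^sub>R b) (Th' t)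
          = Xtilde X (bp + t *\<^sub>R a, bm + t *\<^sub>R b, Tp + t *\<^sub>R C, Tm + t *\<^sub>R D)"
        unfolding Th'_def by (rule Xt_gen[symmetric]) (simp add: Tpd vdiag)
      also have "(bp + t *\<^sub>R a, bm + t *\<^sub>R b, Tp + t *\<^sub>R C, Tm + t *\<^sub>R D) = phi_of bp bm Th + t *\<^sub>R (a, b, C, D)"
        by (simp add: phi)
      finally show ?thesis using Xt_scale[of X t "(a, b, C, D)"] by (simp add: Xt_add m_def)
    qed
    have n2: "(norm (r - t *\<^sub>R m))\<^sup>2 = inner r r - 2 * t * inner r m + t\<^sup>2 * inner m m"
      unfolding power2_norm_eq_inner by (simp add: inner_diff_left inner_diff_right inner_commute power2_eq_square algebra_simps)
    have n0: "(norm r)\<^sup>2 = inner r r" by (simp add: power2_norm_eq_inner)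
    have pen1: "(\<Sum>j\<in>UNIV. (bp + t *\<^sub>R a) $ j + (bm + t *\<^sub>R b) $ j) = (\<Sum>j\<in>UNIV. bp $ j + bm $ j) + t * (\<Sum>j\<in>UNIV. a $ j + b $ j)"
      by (simp add: sum.distrib sum_distrib_left algebra_simps)
    have pen2: "(\<Sum>j\<in>UNIV. \<Sum>k\<in>UNIV - {j}. \<bar>Th' t $ j $ k\<bar>) = (\<Sum>j\<in>UNIV. \<Sum>k\<in>UNIV - {j}. \<bar>Th $ j $ k\<bar>)
        + t * (\<Sum>j\<in>UNIV. \<Sum>k\<in>UNIV - {j}. C $ j $ k + D $ j $ k)"
      by (simp only: abs' sum.distrib[of "\<lambda>k. \<bar>Th $ _ $ k\<bar>"] sum.distrib[of "\<lambda>j. \<Sum>k\<in>UNIV - {j}. \<bar>Th $ j $ k\<bar>"] sum_distrib_left)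
    have "shl_obj X y lam (bp + t *\<^sub>R a) (bm + t *\<^sub>R b) (Th' t) = shl_obj X y lam bp bm Th + g t"
    proof -
      have e1: "y - (Xtilde X (phi_of bp bm Th) + t *\<^sub>R m) = r - t *\<^sub>R m" by (simp add: r_def)
      have e0: "y - Xtilde X (phi_of bp bm Th) = r" by (simp add: r_def)
      show ?thesis
        unfolding obj_eq fit Xphi pen1 pen2 g_def cpen_def e1 e0 n2 n0 prod.case
        by (simp add: algebra_simps)
    qed
    then show ?thesis using le by simp
  qed
  have "DERIV g 0 :> (lam * cpen (a, b, C, D) - inner r m)"
    unfolding g_def by (auto intro!: derivative_eq_intros)
  moreover have "\<forall>t. \<bar>0 - t\<bar> < d \<longrightarrow> g 0 \<le> g t" using key by (simp add: g_def)
  ultimately have "lam * cpen (a, b, C, D) - inner r m = 0" using DERIV_local_min d by blast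
  then show ?thesis by (simp add: r_def m_def)
qed


type_synonym 'p pat = "'p set \<times> 'p set \<times> 'p set \<times> ('p \<times> 'p) set \<times> ('p \<times> 'p) set \<times> 'p set"

definition VP :: "('p::finite) pat \<Rightarrow> 'p phi set" where
  "VP pt = (case pt of (A1, A2, A3, A4, A5, A6) \<Rightarrow>
    {(a, b, C, D).
        (\<forall>j. C $ j $ j = 0 \<and> D $ j $ j = 0) \<and>
        (\<forall>j k. C $ j $ k - D $ j $ k = C $ k $ j - D $ k $ j) \<and>
        (\<forall>j\<in>A1. a $ j = 0) \<and>
        (\<forall>j\<in>A2. b $ j = 0) \<and>
        (\<forall>j\<in>A3. a $ j + b $ j - (\<Sum>k\<in>UNIV. C $ j $ k + D $ j $ k) = 0) \<and>
        (\<forall>j k. j \<noteq> k \<longrightarrow> (j, k) \<in> A4 \<longrightarrow> C $ j $ k = 0) \<and>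
        (\<forall>j k. j \<noteq> k \<longrightarrow> (j, k) \<in> A5 \<longrightarrow> D $ j $ k = 0)})"

definition UP :: "('p::finite) pat \<Rightarrow> 'p phi set" where
  "UP pt = VP pt \<inter> {(a, b, C, D). \<forall>j\<in>snd (snd (snd (snd (snd pt)))). a $ j = b $ j}"

definition patt :: "real^'p \<Rightarrow> real^'p \<Rightarrow> real^'p^'p \<Rightarrow> ('p::finite) pat" where
  "patt bp bm Th = ({j. bp $ j = 0}, {j. bm $ j = 0}, {j. (\<Sum>k\<in>UNIV. \<bar>Th $ j $ k\<bar>) = bp $ j + bm $ j},
     {(j, k). Tpos Th $ j $ k = 0}, {(j, k). Tneg Th $ j $ k = 0}, {j. 0 < bp $ j \<and> 0 < bm $ j \<and> bp $ j = bm $ j})"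

lemma active_VP: "active_space (phi_of bp bm Th) = VP (patt bp bm Th)"
  unfolding active_alt VP_def patt_def by auto

lemma subspace_VP: "subspace (VP pt)"
  unfolding subspace_def VP_def
  by (auto simp: zero_prod_def algebra_simps sum.distrib sum_distrib_left[symmetric] split: prod.splits) (metis distrib_left)+

lemma subspace_UP: "subspace (UP pt)"
proof -
  have "subspace {(a, b, C, D). \<forall>j\<in>snd (snd (snd (snd (snd pt)))). a $ j = (b::real^'a) $ j :: bool}"
    unfolding subspace_def by (auto simp: zero_prod_def split: prod.splits)
  then show ?thesis unfolding UP_def using subspace_VP[of pt] by (intro subspace_inter)
qed



definition goodw :: "real^'p^'n \<Rightarrow> ('p::finite) pat \<Rightarrow> 'p phi \<Rightarrow> bool" where
  "goodw X pt w \<longleftrightarrow> w \<in> VP pt \<and> Xtilde X w \<noteq> 0 \<and> (\<forall>u\<in>UP pt. inner (Xtilde X w) (Xtilde X u) = 0)"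

definition Hyp :: "real^'p^'n \<Rightarrow> real \<Rightarrow> ('p::finite) pat \<Rightarrow> (real^'n) set" where
  "Hyp X lam pt = (if \<exists>w. goodw X pt w then
     {y. inner (Xtilde X (SOME w. goodw X pt w)) y = lam * cpen (SOME w. goodw X pt w)} else {})"

lemma phi_in_UP:
  assumes "shl_feasible bp bm Th"
  shows "phi_of bp bm Th \<in> UP (patt bp bm Th)"
proof -
  have diag: "\<And>j. Th $ j $ j = 0" and sym: "\<And>j k. Th $ j $ k = Th $ k $ j"
    using assms unfolding shl_feasible_def by auto
  have s: "Tpos Th $ j $ k - Tneg Th $ j $ k = Tpos Th $ k $ j - Tneg Th $ k $ j" for j k
    using sym[of j k] by (simp add: Tpos_def Tneg_def max_def)
  have dg: "Tpos Th $ j $ j = 0" "Tneg Th $ j $ j = 0" for j using diag[of j] by (simp_all add: Tpos_def Tneg_def)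
  show ?thesis
    unfolding phi_of_alt UP_def VP_def patt_def
    using dg s sum_abs_T[of Th] by simp
qed

lemma image_VP_UP:
  fixes X :: "real^'p::finite^'n"
  assumes sol: "shl_solution X y lam bp bm Th"
    and ny: "y \<notin> Hyp X lam (patt bp bm Th)"
  shows "Xtilde X ` VP (patt bp bm Th) \<subseteq> Xtilde X ` UP (patt bp bm Th)"
proof
  define pt where "pt = patt bp bm Th"
  have subU: "subspace (Xtilde X ` UP pt)"
    by (rule linear_subspace_image[OF Xt_linear subspace_UP])
  have UV: "UP pt \<subseteq> VP pt" unfolding UP_def by auto
  have phiU: "phi_of bp bm Th \<in> UP pt" unfolding pt_def using sol sol_feas phi_in_UP by blast
  fix x assume "x \<in> Xtilde X ` VP (patt bp bm Th)"
  then obtain v where v: "v \<in> VP pt" and xv: "x = Xtilde X v" unfolding pt_def by blast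
  show "x \<in> Xtilde X ` UP (patt bp bm Th)"
  proof (rule ccontr)
    assume nx: "x \<notin> Xtilde X ` UP (patt bp bm Th)"
    obtain p z where p: "p \<in> span (Xtilde X ` UP pt)"
      and z: "\<And>w. w \<in> span (Xtilde X ` UP pt) \<Longrightarrow> orthogonal z w" and pz: "x = p + z"
      using orthogonal_subspace_decomp_exists[of "Xtilde X ` UP pt" x] by blast
    have spE: "span (Xtilde X ` UP pt) = Xtilde X ` UP pt" using subU by (simp add: span_eq_iff)
    have "p \<in> Xtilde X ` UP pt" using p spE by simp
    then obtain u where u: "u \<in> UP pt" and pu: "p = Xtilde X u" by blast
    have zw: "z = Xtilde X (v - u)" using pz pu xv linear_diff[OF Xt_linear, of X v u] by (simp add: algebra_simps)
    have "v - u \<in> VP pt" by (rule subspace_diff[OF subspace_VP v]) (use u UV in blast)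
    moreover have "Xtilde X (v - u) \<noteq> 0"
    proof
      assume "Xtilde X (v - u) = 0"
      then have "x = Xtilde X u" using zw pz pu by simp
      then show False using nx u unfolding pt_def by blast
    qed
    moreover have "\<forall>u'\<in>UP pt. inner (Xtilde X (v - u)) (Xtilde X u') = 0"
    proof
      fix u' assume u': "u' \<in> UP pt"
      have "Xtilde X u' \<in> span (Xtilde X ` UP pt)" by (rule span_base) (use u' in blast)
      then have "orthogonal z (Xtilde X u')" by (rule z)
      then show "inner (Xtilde X (v - u)) (Xtilde X u') = 0" using zw by (simp add: orthogonal_def)
    qed
    ultimately have ex: "\<exists>w. goodw X pt w" unfolding goodw_def by blast
    define w0 where "w0 = (SOME w. goodw X pt w)"
    have g0: "goodw X pt w0" unfolding w0_def using ex by (rule someI_ex)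
    have "Hyp X lam pt = {y. inner (Xtilde X w0) y = lam * cpen w0}"
      unfolding Hyp_def w0_def using ex by simp
    then have ny': "inner (Xtilde X w0) y \<noteq> lam * cpen w0"
      using ny unfolding pt_def by simp
    obtain a b C D where w0e: "w0 = (a, b, C, D)" by (cases w0) auto
    have "w0 \<in> active_space (phi_of bp bm Th)" using g0 unfolding goodw_def active_VP pt_def by simp
    then have st: "inner (y - Xtilde X (phi_of bp bm Th)) (Xtilde X w0) = lam * cpen w0"
      using stationarity[OF sol] w0e by simp
    have "inner (Xtilde X w0) (Xtilde X (phi_of bp bm Th)) = 0" using g0 phiU unfolding goodw_def by blast
    moreover have "inner (Xtilde X w0) (y - Xtilde X (phi_of bp bm Th)) = lam * cpen w0"
      using st inner_commute[of "y - Xtilde X (phi_of bp bm Th)" "Xtilde X w0"] by simp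
    ultimately have "inner (Xtilde X w0) y = lam * cpen w0"
      by (simp add: inner_diff_right)
    then show False using ny' by simp
  qed
qed



lemma tight_both:
  fixes X :: "real^'p::finite^'n"
  assumes sol: "shl_solution X y lam bp bm Th" and lam: "lam > 0"
    and p: "0 < bp $ j" "0 < bm $ j"
  shows "(\<Sum>k\<in>UNIV. \<bar>Th $ j $ k\<bar>) = bp $ j + bm $ j"
proof (rule ccontr)
  assume ne: "(\<Sum>k\<in>UNIV. \<bar>Th $ j $ k\<bar>) \<noteq> bp $ j + bm $ j"
  have fe: "shl_feasible bp bm Th" using sol by (rule sol_feas)
  then have hier: "\<And>i. (\<Sum>k\<in>UNIV. \<bar>Th $ i $ k\<bar>) \<le> bp $ i + bm $ i"
    and nn: "\<And>i. 0 \<le> bp $ i" "\<And>i. 0 \<le> bm $ i"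
    and d: "\<forall>i. Th $ i $ i = 0" and s: "\<forall>i k. Th $ i $ k = Th $ k $ i"
    unfolding shl_feasible_def by auto
  define eps where "eps = min (min (bp $ j) (bm $ j)) ((bp $ j + bm $ j - (\<Sum>k\<in>UNIV. \<bar>Th $ j $ k\<bar>)) / 2)"
  have eps: "eps > 0" using p ne hier[of j] by (simp add: eps_def)
  define e where "e = (axis j eps :: real^'p)"
  have feas': "shl_feasible (bp - e) (bm - e) Th"
    unfolding shl_feasible_def
  proof (intro conjI allI)
    fix i
    show "(\<Sum>k\<in>UNIV. \<bar>Th $ i $ k\<bar>) \<le> (bp - e) $ i + (bm - e) $ i"
    proof (cases "i = j")
      case True
      have "eps \<le> (bp $ j + bm $ j - (\<Sum>k\<in>UNIV. \<bar>Th $ j $ k\<bar>)) / 2" unfolding eps_def by linarith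
      then show ?thesis using True by (simp add: e_def axis_def)
    qed (use hier[of i] in \<open>simp add: e_def axis_def\<close>)
    show "0 \<le> (bp - e) $ i" "0 \<le> (bm - e) $ i"
      using nn[of i] by (cases "i = j"; auto simp: e_def axis_def eps_def)+
  qed (use d s in auto)
  have le: "shl_obj X y lam bp bm Th \<le> shl_obj X y lam (bp - e) (bm - e) Th"
    using sol feas' unfolding shl_solution_def by blast
  have f: "fitf X (bp - e) (bm - e) Th = fitf X bp bm Th" by (simp add: fitf_def)
  have se: "(\<Sum>i\<in>UNIV. e $ i) = eps" by (simp add: e_def axis_def)
  have "(\<Sum>i\<in>UNIV. (bp - e) $ i + (bm - e) $ i) = (\<Sum>i\<in>UNIV. bp $ i + bm $ i) - 2 * eps"
    using se by (simp add: sum.distrib sum_subtractf sum_distrib_left[symmetric])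
  then have "shl_obj X y lam (bp - e) (bm - e) Th = shl_obj X y lam bp bm Th - 2 * lam * eps"
    unfolding obj_eq f by (simp only: \<open>(\<Sum>i\<in>UNIV. (bp - e) $ i + (bm - e) $ i) = _\<close>) (simp add: algebra_simps)
  then show False using le lam eps mult_pos_pos[OF lam eps] by simp
qed

definition fmap :: "'p set \<Rightarrow> ('p \<times> 'p) set \<Rightarrow> ('p::finite) phi \<Rightarrow> real^('p + ('p \<times> 'p))" where
  "fmap Bs AT u = (\<chi> i. case i of Inl j \<Rightarrow> (if j \<in> Bs then fst u $ j - fst (snd u) $ j else 0)
       | Inr jk \<Rightarrow> (if jk \<in> AT then fst (snd (snd u)) $ fst jk $ snd jk - snd (snd (snd u)) $ fst jk $ snd jk else 0))"

lemma fmap_linear: "linear (fmap Bs AT)"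
proof (rule linearI)
  fix u v :: "'a phi" and c :: real
  show "fmap Bs AT (u + v) = fmap Bs AT u + fmap Bs AT v"
    unfolding fmap_def vec_eq_iff by (simp split: sum.split)
  show "fmap Bs AT (c *\<^sub>R u) = c *\<^sub>R fmap Bs AT u"
    unfolding fmap_def vec_eq_iff by (simp add: algebra_simps split: sum.split)
qed


lemma fmap_zero:
  fixes X :: "real^'p::{finite,linorder}^'n"
  assumes sol: "shl_solution X y lam bp bm Th" and lam: "lam > 0"
    and u: "u \<in> UP (patt bp bm Th)"
    and Bs: "Bs = {j. bp $ j - bm $ j \<noteq> 0} - ({j. (\<Sum>k\<in>UNIV. \<bar>Th $ j $ k\<bar>) = bp $ j + bm $ j}
                   \<inter> (({j. bp $ j > 0} - {j. bm $ j > 0}) \<union> ({j. bm $ j > 0} - {j. bp $ j > 0})))"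
    and AT: "AT = {(j, k). Th $ j $ k \<noteq> 0 \<and> j < k}"
    and z: "fmap Bs AT u = 0"
  shows "u = 0"
proof -
  obtain a b C D where ue: "u = (a, b, C, D)" by (cases u) auto
  have fe: "shl_feasible bp bm Th" using sol by (rule sol_feas)
  then have diag: "\<And>j. Th $ j $ j = 0" and sym: "\<And>j k. Th $ j $ k = Th $ k $ j"
    and nn: "\<And>j. 0 \<le> bp $ j" "\<And>j. 0 \<le> bm $ j"
    unfolding shl_feasible_def by auto
  have vdiag: "\<And>j. C $ j $ j = 0" "\<And>j. D $ j $ j = 0"
    and vsym: "\<And>j k. C $ j $ k - D $ j $ k = C $ k $ j - D $ k $ j"
    and va: "\<And>j. bp $ j = 0 \<Longrightarrow> a $ j = 0"
    and vb: "\<And>j. bm $ j = 0 \<Longrightarrow> b $ j = 0"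
    and vt: "\<And>j. (\<Sum>k\<in>UNIV. \<bar>Th $ j $ k\<bar>) = bp $ j + bm $ j \<Longrightarrow>
              a $ j + b $ j - (\<Sum>k\<in>UNIV. C $ j $ k + D $ j $ k) = 0"
    and vC: "\<And>j k. j \<noteq> k \<Longrightarrow> Tpos Th $ j $ k = 0 \<Longrightarrow> C $ j $ k = 0"
    and vD: "\<And>j k. j \<noteq> k \<Longrightarrow> Tneg Th $ j $ k = 0 \<Longrightarrow> D $ j $ k = 0"
    and vJ: "\<And>j. 0 < bp $ j \<Longrightarrow> 0 < bm $ j \<Longrightarrow> bp $ j = bm $ j \<Longrightarrow> a $ j = b $ j"
    using u unfolding ue UP_def VP_def patt_def by auto
  have fB: "a $ j = b $ j" if "j \<in> Bs" for j
    using arg_cong[OF z, of "\<lambda>x. x $ Inl j"] that by (simp add: ue fmap_def)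
  have fA: "C $ j $ k = D $ j $ k" if "(j, k) \<in> AT" for j k
    using arg_cong[OF z, of "\<lambda>x. x $ Inr (j, k)"] that by (simp add: ue fmap_def)
  have CD: "C $ j $ k = 0 \<and> D $ j $ k = 0" for j k
  proof (cases "j = k")
    case True then show ?thesis using vdiag by simp
  next
    case False
    show ?thesis
    proof (cases "Th $ j $ k = 0")
      case True
      then have "Tpos Th $ j $ k = 0" "Tneg Th $ j $ k = 0" by (simp_all add: Tpos_def Tneg_def)
      then show ?thesis using vC vD False by blast
    next
      case nz: False
      have eq: "C $ j $ k = D $ j $ k"
      proof (cases "j < k")
        case True then show ?thesis using fA[of j k] nz AT by simp
      next
        case False
        then have "k < j" using \<open>j \<noteq> k\<close> by simp
        then have "C $ k $ j = D $ k $ j" using fA[of k j] nz sym[of j k] AT by simp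
        then show ?thesis using vsym[of j k] by simp
      qed
      show ?thesis
      proof (cases "Th $ j $ k > 0")
        case True
        then have "Tneg Th $ j $ k = 0" by (simp add: Tneg_def)
        then show ?thesis using vD False eq by auto
      next
        case False
        then have "Tpos Th $ j $ k = 0" by (simp add: Tpos_def)
        then show ?thesis using vC \<open>j \<noteq> k\<close> eq by auto
      qed
    qed
  qed
  have ab: "a $ j = 0 \<and> b $ j = 0" for j
  proof -
    have t: "(\<Sum>k\<in>UNIV. \<bar>Th $ j $ k\<bar>) = bp $ j + bm $ j \<Longrightarrow> a $ j + b $ j = 0"
      using vt[of j] CD by simp
    consider "bp $ j = 0" "bm $ j = 0" | "bp $ j > 0" "bm $ j = 0" | "bp $ j = 0" "bm $ j > 0"
      | "bp $ j > 0" "bm $ j > 0"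
      using nn[of j] by fastforce
    then show ?thesis
    proof cases
      case 1 then show ?thesis using va vb by simp
    next
      case 2
      then have "b $ j = 0" using vb by simp
      show ?thesis
      proof (cases "(\<Sum>k\<in>UNIV. \<bar>Th $ j $ k\<bar>) = bp $ j + bm $ j")
        case True then show ?thesis using t \<open>b $ j = 0\<close> by simp
      next
        case False then have "j \<in> Bs" using 2 Bs by auto
        then show ?thesis using fB \<open>b $ j = 0\<close> by simp
      qed
    next
      case 3
      then have "a $ j = 0" using va by simp
      show ?thesis
      proof (cases "(\<Sum>k\<in>UNIV. \<bar>Th $ j $ k\<bar>) = bp $ j + bm $ j")
        case True then show ?thesis using t \<open>a $ j = 0\<close> by simp
      next
        case False then have "j \<in> Bs" using 3 Bs by auto
        then show ?thesis using fB \<open>a $ j = 0\<close> by simp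
      qed
    next
      case 4
      then have s0: "a $ j + b $ j = 0" using t tight_both[OF sol lam] by blast
      have "a $ j = b $ j"
      proof (cases "bp $ j = bm $ j")
        case True then show ?thesis using vJ 4 by simp
      next
        case False then have "j \<in> Bs" using 4 Bs by auto
        then show ?thesis using fB by simp
      qed
      then show ?thesis using s0 by simp
    qed
  qed
  have "a = 0" "b = 0" using ab by (simp_all add: vec_eq_iff)
  moreover have "C = 0" "D = 0" using CD by (simp_all add: vec_eq_iff)
  ultimately show ?thesis by (simp add: ue zero_prod_def)
qed



lemma dim_UP_le:
  fixes X :: "real^'p::{finite,linorder}^'n"
  assumes sol: "shl_solution X y lam bp bm Th" and lam: "lam > 0"
    and Bs: "Bs = {j. bp $ j - bm $ j \<noteq> 0} - ({j. (\<Sum>k\<in>UNIV. \<bar>Th $ j $ k\<bar>) = bp $ j + bm $ j}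
                   \<inter> (({j. bp $ j > 0} - {j. bm $ j > 0}) \<union> ({j. bm $ j > 0} - {j. bp $ j > 0})))"
    and AT: "AT = {(j, k). Th $ j $ k \<noteq> 0 \<and> j < k}"
  shows "dim (UP (patt bp bm Th)) \<le> card Bs + card AT"
proof -
  define U where "U = UP (patt bp bm Th)"
  have sU: "subspace U" unfolding U_def by (rule subspace_UP)
  have spanU: "span U = U" using sU span_eq_iff by blast
  have inj: "inj_on (fmap Bs AT) (span U)"
    unfolding spanU
  proof (rule inj_onI)
    fix x z assume x: "x \<in> U" and z: "z \<in> U" and e: "fmap Bs AT x = fmap Bs AT z"
    have "fmap Bs AT (x - z) = 0" using e linear_diff[OF fmap_linear, of Bs AT x z] by simp
    moreover have "x - z \<in> UP (patt bp bm Th)" using x z sU subspace_diff unfolding U_def by blast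
    ultimately have "x - z = 0" using fmap_zero[OF sol lam _ Bs AT] by blast
    then show "x = z" by simp
  qed
  have de: "dim (fmap Bs AT ` U) = dim U" by (rule dim_image_eq[OF fmap_linear inj])
  define d where "d = (\<lambda>i. axis i (1::real)) ` (Inl ` Bs \<union> Inr ` AT)"
  have dB: "d \<subseteq> Basis" unfolding d_def by auto
  have sub: "fmap Bs AT ` U \<subseteq> {x. \<forall>i\<in>Basis. i \<notin> d \<longrightarrow> x \<bullet> i = 0}"
  proof (clarify)
    fix u i assume i: "i \<in> (Basis :: (real^('p + ('p \<times> 'p))) set)" and nd: "i \<notin> d"
    obtain \<iota> where ie: "i = axis \<iota> 1" using i unfolding Basis_vec_def by auto
    have "\<iota> \<notin> Inl ` Bs \<union> Inr ` AT" using nd ie unfolding d_def by auto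
    then show "fmap Bs AT u \<bullet> i = 0"
      unfolding ie inner_axis by (cases \<iota>) (auto simp: fmap_def)
  qed
  have "dim U = dim (fmap Bs AT ` U)" using de by simp
  also have "\<dots> \<le> dim {x. \<forall>i\<in>Basis. i \<notin> d \<longrightarrow> x \<bullet> i = (0::real)}" by (rule dim_subset[OF sub])
  also have "\<dots> = card d" by (rule dim_substandard[OF dB])
  also have "card d = card (Inl ` Bs \<union> Inr ` AT)"
    unfolding d_def by (rule card_image) (auto simp: inj_on_def axis_eq_axis)
  also have "\<dots> = card Bs + card AT"
    by (subst card_Un_disjoint) (auto simp: card_image)
  finally show ?thesis unfolding U_def .
qed



lemma orth_proj_in:
  fixes V :: "'a::euclidean_space set"
  assumes sV: "subspace V"
  shows "orth_proj V v \<in> V"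
proof -
  have spV: "span V = V" using sV span_eq_iff by blast
  obtain p z where p: "p \<in> span V" and z: "\<And>w. w \<in> span V \<Longrightarrow> orthogonal z w" and pz: "v = p + z"
    using orthogonal_subspace_decomp_exists[of V v] by blast
  have ex: "\<exists>!w. w \<in> V \<and> (\<forall>u\<in>V. inner (v - w) u = 0)"
  proof (rule ex1I[of _ p])
    show "p \<in> V \<and> (\<forall>u\<in>V. inner (v - p) u = 0)"
      using p z pz spV unfolding orthogonal_def by auto
  next
    fix w assume w: "w \<in> V \<and> (\<forall>u\<in>V. inner (v - w) u = 0)"
    have pw: "p - w \<in> V" using w p spV sV subspace_diff by blast
    have "inner (p - w) (p - w) = inner (v - w) (p - w) - inner (v - p) (p - w)"
      by (simp add: inner_diff_left)
    also have "\<dots> = 0" using w pw z[of "p - w"] pz spV unfolding orthogonal_def by auto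
    finally show "w = p" by simp
  qed
  show ?thesis unfolding orth_proj_def using theI'[OF ex] by blast
qed

lemma main_det:
  fixes X :: "real^'p::{finite,linorder}^'n"
  assumes sol: "shl_solution X y lam bp bm Th" and lam: "lam > 0"
    and ny: "y \<notin> Hyp X lam (patt bp bm Th)"
  shows "int (dim (range (\<lambda>v. Xtilde X (orth_proj (active_space (phi_of bp bm Th)) v))))
         \<le> int (card {j. bp $ j - bm $ j \<noteq> 0})
           + int (card {(j, k). Th $ j $ k \<noteq> 0 \<and> j < k})
           - int (card ({j. (\<Sum>k\<in>UNIV. \<bar>Th $ j $ k\<bar>) = bp $ j + bm $ j}
                   \<inter> (({j. bp $ j > 0} - {j. bm $ j > 0}) \<union> ({j. bm $ j > 0} - {j. bp $ j > 0}))))"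
proof -
  define TD where "TD = {j. (\<Sum>k\<in>UNIV. \<bar>Th $ j $ k\<bar>) = bp $ j + bm $ j}
                   \<inter> (({j. bp $ j > 0} - {j. bm $ j > 0}) \<union> ({j. bm $ j > 0} - {j. bp $ j > 0}))"
  define AB where "AB = {j. bp $ j - bm $ j \<noteq> 0}"
  define AT where "AT = {(j, k). Th $ j $ k \<noteq> 0 \<and> j < k}"
  have TDAB: "TD \<subseteq> AB" unfolding TD_def AB_def by (auto simp: not_less)
  have r: "range (\<lambda>v. Xtilde X (orth_proj (active_space (phi_of bp bm Th)) v)) \<subseteq> Xtilde X ` VP (patt bp bm Th)"
    using orth_proj_in[OF subspace_VP] unfolding active_VP by blast
  have "dim (range (\<lambda>v. Xtilde X (orth_proj (active_space (phi_of bp bm Th)) v)))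
      \<le> dim (Xtilde X ` UP (patt bp bm Th))"
    using r image_VP_UP[OF sol ny] by (intro dim_subset) blast
  also have "\<dots> \<le> dim (UP (patt bp bm Th))" by (rule dim_image_le[OF Xt_linear])
  also have "\<dots> \<le> card (AB - TD) + card AT"
    by (rule dim_UP_le[OF sol lam]) (simp_all add: AB_def TD_def AT_def)
  also have "card (AB - TD) = card AB - card TD" by (rule card_Diff_subset) (simp_all add: TDAB)
  finally have "dim (range (\<lambda>v. Xtilde X (orth_proj (active_space (phi_of bp bm Th)) v)))
      \<le> card AB - card TD + card AT" .
  moreover have "card TD \<le> card AB" by (rule card_mono) (auto simp: TDAB)
  ultimately show ?thesis unfolding TD_def[symmetric] AB_def[symmetric] AT_def[symmetric] by linarith
qed

lemma hyp_null:
  fixes g :: "real^'n"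
  assumes "g \<noteq> 0"
  shows "{y. inner g y = c} \<in> null_sets lborel"
proof -
  have "negligible {y. inner g y = c}" using assms by (intro negligible_hyperplane) simp
  then have "{y. inner g y = c} \<in> null_sets lebesgue" by (simp add: negligible_iff_null_sets)
  moreover have "{y. inner g y = c} \<in> sets lborel" using closed_hyperplane by simp
  ultimately show ?thesis using null_sets_completion_iff by blast
qed

lemma Hyp_null: "Hyp X lam pt \<in> null_sets lborel"
proof (cases "\<exists>w. goodw X pt w")
  case True
  then have "goodw X pt (SOME w. goodw X pt w)" by (rule someI_ex)
  then have "Xtilde X (SOME w. goodw X pt w) \<noteq> 0" unfolding goodw_def by blast
  then show ?thesis using True unfolding Hyp_def by (simp add: hyp_null)
qed (simp add: Hyp_def)

lemma dens_meas: "(\<lambda>y. ennreal (\<Prod>i\<in>UNIV. normal_density (mu $ i) sg ((y::real^'n) $ i))) \<in> borel_measurable lborel"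
  by measurable



theorem mainTheorem6:
  fixes X :: "real^'p::{finite,linorder}^'n" and lam sg :: real and mu :: "real^'n"
  assumes "lam > 0" and "sg > 0"
  shows "AE y in gauss_law mu sg.
     \<forall>bp bm Th. shl_solution X y lam bp bm Th \<longrightarrow>
       int (dim (range (\<lambda>v. Xtilde X (orth_proj (active_space (phi_of bp bm Th)) v))))
         \<le> int (card {j. bp $ j - bm $ j \<noteq> 0})
           + int (card {(j, k). Th $ j $ k \<noteq> 0 \<and> j < k})
           - int (card ({j. (\<Sum>k\<in>UNIV. \<bar>Th $ j $ k\<bar>) = bp $ j + bm $ j}
                   \<inter> (({j. bp $ j > 0} - {j. bm $ j > 0}) \<union> ({j. bm $ j > 0} - {j. bp $ j > 0}))))"
proof -
  define N where "N = (\<Union>pt\<in>(UNIV :: 'p pat set). Hyp X lam pt)"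
  have N: "N \<in> null_sets lborel" unfolding N_def
    by (intro null_sets.finite_UN) (simp_all add: Hyp_null)
  have "AE y in lborel.
     \<forall>bp bm Th. shl_solution X y lam bp bm Th \<longrightarrow>
       int (dim (range (\<lambda>v. Xtilde X (orth_proj (active_space (phi_of bp bm Th)) v))))
         \<le> int (card {j. bp $ j - bm $ j \<noteq> 0})
           + int (card {(j, k). Th $ j $ k \<noteq> 0 \<and> j < k})
           - int (card ({j. (\<Sum>k\<in>UNIV. \<bar>Th $ j $ k\<bar>) = bp $ j + bm $ j}
                   \<inter> (({j. bp $ j > 0} - {j. bm $ j > 0}) \<union> ({j. bm $ j > 0} - {j. bp $ j > 0}))))"
  proof (rule AE_I'[OF N])
    show "{y \<in> space lborel. \<not> (\<forall>bp bm Th. shl_solution X y lam bp bm Th \<longrightarrow>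
       int (dim (range (\<lambda>v. Xtilde X (orth_proj (active_space (phi_of bp bm Th)) v))))
         \<le> int (card {j. bp $ j - bm $ j \<noteq> 0})
           + int (card {(j, k). Th $ j $ k \<noteq> 0 \<and> j < k})
           - int (card ({j. (\<Sum>k\<in>UNIV. \<bar>Th $ j $ k\<bar>) = bp $ j + bm $ j}
                   \<inter> (({j. bp $ j > 0} - {j. bm $ j > 0}) \<union> ({j. bm $ j > 0} - {j. bp $ j > 0})))))} \<subseteq> N"
      using main_det[OF _ assms(1)] unfolding N_def by blast
  qed
  then show ?thesis unfolding gauss_law_def
    by (subst AE_density[OF dens_meas]) (auto elim: AE_mp)
qed


end
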